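(* Let $\epsilon\in(0,1)$ and let $D$ be a joint distribution of $(\mathbf{x},y)$ on $\mathbb{R}^d\times\{\pm1\}$ with $\mathbf{x}$-marginal $\mathcal{N}_d$. Suppose $D$ satisfies the reliability condition with respect to $f(\mathbf{x})=\mathrm{sign}(\langle\mathbf{w}^*,\mathbf{x}\rangle-t^* )$, with $\mathbf{w}^*$ a unit vector. Let $\mathbf{w}$ be a unit vector with $\langle\mathbf{w},\mathbf{w}^*\rangle>0$, let $t$ satisfy $t-t^*\in[0,\epsilon/100]$, and suppose $h(\mathbf{x})=\mathrm{sign}(\langle\mathbf{w},\mathbf{x}\rangle-t)$ does not satisfy $R_+(h;D)\le\epsilon/2$. Let $B=\{\mathbf{x}\in\mathbb{R}^d:\langle\mathbf{w},\mathbf{x}\rangle-t\ge0\}$ and let $D'$ be the distribution of $(\mathbf{x}',y)=(\mathbf{x}^{\perp\mathbf{w}},y)$ for $(\mathbf{x},y)\sim D$ conditioned on $\mathbf{x}\in B$. Then: (1) $D'$ has $\mathbf{x}'$-marginal $\mathcal{N}_{d-1}$; (2) $D'$ satisfies the reliability condition with respect to $h'(\mathbf{x})=\mathrm{sign}(\langle\mathbf{w}',\mathbf{x}\rangle-t')$ for $\mathbf{w}'={\mathbf{w}^*}^{\perp\mathbf{w}}/\|{\mathbf{w}^*}^{\perp\mathbf{w}}\|_2$ and some $t'$ with $|t'|\le|t^*|$; (3) $\Pr_{(\mathbf{x}',y)\sim D'}[y=-1]\ge\epsilon/2$.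
   Context: A distribution $D$ on $X\times\{\pm1\}$ satisfies the reliability condition with respect to $f$ if $\Pr_{(\mathbf{x},y)\sim D}[f(\mathbf{x})=+1\wedge y=-1]=0$. $R_+(h;D)=\Pr_{(\mathbf{x},y)\sim D}[h(\mathbf{x})=1\wedge y=-1]$. For $\mathbf{x}\in\mathbb{R}^d$ and a unit vector $\mathbf{w}$, $\mathbf{x}^{\perp\mathbf{w}}\in\mathbb{R}^{d-1}$ denotes the coordinates, with respect to a fixed orthonormal basis $\mathbf{B}$ of the orthogonal complement of $\mathbf{w}$, of the projection of $\mathbf{x}$ onto that complement, i.e. $\mathbf{x}^{\perp\mathbf{w}}=\mathbf{B}^\top\mathbf{x}$. *)

theory Defs
  imports "HOL-Probability.Probability"
begin

text \<open>Sign convention: sign(z) = +1 for z \<ge> 0 and -1 otherwise (matching the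
  halfspace B = {x. w.x - t \<ge> 0} on which h = +1).\<close>
definition hsign :: "real \<Rightarrow> real" where
  "hsign z = (if z \<ge> 0 then 1 else -1)"

definition std_gaussian :: "'a::euclidean_space measure" where
  "std_gaussian = density lborel
     (\<lambda>x. ennreal ((2 * pi) powr (- real DIM('a) / 2) * exp (- (norm x)\<^sup>2 / 2)))"

definition reliable :: "('a \<times> real) measure \<Rightarrow> ('a \<Rightarrow> real) \<Rightarrow> bool" where
  "reliable D f \<longleftrightarrow> measure D {(x, y). f x = 1 \<and> y = -1} = 0"

definition R_plus :: "('a \<Rightarrow> real) \<Rightarrow> ('a \<times> real) measure \<Rightarrow> real" where
  "R_plus h D = measure D {(x, y). h x = 1 \<and> y = -1}"

text \<open>Coordinates of the projection onto the orthogonal complement of w w.r.t. the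
  orthonormal basis {b i | i \<in> Basis}: x^{\<perp>w} = B^T x.\<close>
definition perp_coords :: "('b::euclidean_space \<Rightarrow> 'a::euclidean_space) \<Rightarrow> 'a \<Rightarrow> 'b" where
  "perp_coords b x = (\<Sum>i\<in>Basis. (b i \<bullet> x) *\<^sub>R i)"

end

theory Submission
  imports Defs
begin


lemma lborel_orth_vec:
  fixes Q :: "real^'n::{finite,wellorder} \<Rightarrow> real^'n::_"
  assumes Q: "orthogonal_transformation Q"
  shows "distr lborel borel Q = lborel"
proof (rule lborel_eqI[symmetric])
  have linQ: "linear Q" using Q orthogonal_transformation_linear by blast
  have Qm[measurable]: "Q \<in> borel_measurable borel"
    using linQ linear_conv_bounded_linear by (auto intro!: borel_measurable_continuous_onI linear_continuous_on)
  define Q' where "Q' = inv Q"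
  have Q': "orthogonal_transformation Q'" unfolding Q'_def using Q orthogonal_transformation_inv by blast
  have bij: "bij Q" using Q orthogonal_transformation_bij by blast
  have pre: "Q -` S = Q' ` S" for S
    using bij unfolding Q'_def by (metis bij_vimage_eq_inv_image)
  fix l u :: "real^'n::_" assume le: "\<And>b. b \<in> Basis \<Longrightarrow> l \<bullet> b \<le> u \<bullet> b"
  have bm: "Q -` box l u \<in> sets borel" using measurable_sets_borel[OF Qm, of "box l u"] by simp
  have "emeasure (distr lborel borel Q) (box l u) = emeasure lborel (Q -` box l u)"
    by (simp add: emeasure_distr)
  also have "\<dots> = emeasure lebesgue (Q -` box l u)"
    using bm by simp
  also have "\<dots> = measure lebesgue (Q -` box l u)"
    unfolding pre using measurable_orthogonal_image[OF Q' lmeasurable_box]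
    by (simp add: emeasure_eq_measure2)
  also have "\<dots> = measure lebesgue (box l u)"
    unfolding pre using measure_orthogonal_image[OF Q' lmeasurable_box] by simp
  also have "\<dots> = emeasure lborel (box l u)"
    by (simp add: emeasure_eq_measure2)
  also have "\<dots> = (\<Prod>b\<in>Basis. (u - l) \<bullet> b)"
    using le by (simp add: emeasure_lborel_box_eq box_eq_empty inner_diff_left prod_nonneg)
  finally show "emeasure (distr lborel borel Q) (box l u) = (\<Prod>b\<in>Basis. (u - l) \<bullet> b)" .
qed simp



definition pmap :: "('c::euclidean_space \<Rightarrow> 'd::euclidean_space) \<Rightarrow> 'c \<Rightarrow> 'd" where
  "pmap \<pi> x = (\<Sum>j\<in>Basis. (x \<bullet> j) *\<^sub>R \<pi> j)"

lemma pmap_measurable[measurable]: "pmap \<pi> \<in> borel_measurable borel"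
  unfolding pmap_def by measurable

lemma pmap_inner:
  fixes \<pi> :: "'c::euclidean_space \<Rightarrow> 'd::euclidean_space"
  assumes "bij_betw \<pi> Basis Basis" "k \<in> Basis"
  shows "pmap \<pi> x \<bullet> \<pi> k = x \<bullet> k"
proof -
  have inj: "inj_on \<pi> Basis" using assms(1) bij_betw_def by blast
  have "pmap \<pi> x \<bullet> \<pi> k = (\<Sum>j\<in>Basis. (x \<bullet> j) * (\<pi> j \<bullet> \<pi> k))"
    unfolding pmap_def by (simp add: inner_sum_left)
  also have "\<dots> = (\<Sum>j\<in>Basis. if j = k then x \<bullet> k else 0)"
  proof (rule sum.cong)
    fix j :: 'c assume j: "j \<in> Basis"
    have "\<pi> j \<in> Basis" "\<pi> k \<in> Basis" using assms j bij_betwE by blast+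
    moreover have "\<pi> j = \<pi> k \<longleftrightarrow> j = k" using inj j assms(2) inj_on_eq_iff by metis
    ultimately show "(x \<bullet> j) * (\<pi> j \<bullet> \<pi> k) = (if j = k then x \<bullet> k else 0)"
      by (auto simp: inner_Basis)
  qed simp
  also have "\<dots> = x \<bullet> k" using assms(2) by simp
  finally show ?thesis .
qed

lemma pmap_inner':
  assumes "bij_betw \<pi> Basis Basis" "k \<in> Basis"
  shows "pmap \<pi> x \<bullet> k = x \<bullet> inv_into Basis \<pi> k"
proof -
  have "inv_into Basis \<pi> k \<in> Basis" "\<pi> (inv_into Basis \<pi> k) = k"
    using assms by (auto simp: bij_betw_def inv_into_into f_inv_into_f)
  then show ?thesis using pmap_inner[OF assms(1)] by metis
qed

lemma lborel_pmap:
  fixes \<pi> :: "'c::euclidean_space \<Rightarrow> 'd::euclidean_space"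
  assumes bij: "bij_betw \<pi> Basis Basis"
  shows "distr lborel borel (pmap \<pi>) = lborel"
proof (rule lborel_eqI[symmetric])
  fix l u :: 'd assume le: "\<And>b. b \<in> Basis \<Longrightarrow> l \<bullet> b \<le> u \<bullet> b"
  define l' :: 'c where "l' = (\<Sum>j\<in>Basis. (l \<bullet> \<pi> j) *\<^sub>R j)"
  define u' :: 'c where "u' = (\<Sum>j\<in>Basis. (u \<bullet> \<pi> j) *\<^sub>R j)"
  have l'j: "l' \<bullet> j = l \<bullet> \<pi> j" if "j \<in> Basis" for j
    using that unfolding l'_def by (simp add: inner_sum_left inner_Basis if_distrib cong: if_cong)
  have u'j: "u' \<bullet> j = u \<bullet> \<pi> j" if "j \<in> Basis" for j
    using that unfolding u'_def by (simp add: inner_sum_left inner_Basis if_distrib cong: if_cong)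
  have pre: "pmap \<pi> -` box l u = box l' u'"
  proof -
    have "x \<in> box l u \<longleftrightarrow> (\<forall>j\<in>Basis. l \<bullet> \<pi> j < x \<bullet> \<pi> j \<and> x \<bullet> \<pi> j < u \<bullet> \<pi> j)" for x
      unfolding mem_box using bij bij_betw_imp_surj_on by (metis (no_types, lifting) image_eqI imageE)
    then show ?thesis
      by (auto simp: mem_box pmap_inner[OF bij] l'j u'j)
  qed
  have "emeasure (distr lborel borel (pmap \<pi>)) (box l u) = emeasure lborel (box l' u')"
    by (simp add: emeasure_distr pre[symmetric])
  also have "\<dots> = (\<Prod>j\<in>Basis. (u' - l') \<bullet> j)"
    using le bij by (subst emeasure_lborel_box) (auto simp: l'j u'j bij_betwE)
  also have "\<dots> = (\<Prod>j\<in>Basis. (u - l) \<bullet> \<pi> j)"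
    by (intro arg_cong[where f=ennreal] prod.cong) (auto simp: l'j u'j inner_diff_left)
  also have "\<dots> = (\<Prod>k\<in>Basis. (u - l) \<bullet> k)"
    using prod.reindex_bij_betw[OF bij, of "\<lambda>k. (u - l) \<bullet> k"] by simp
  finally show "emeasure (distr lborel borel (pmap \<pi>)) (box l u) = (\<Prod>k\<in>Basis. (u - l) \<bullet> k)" .
qed simp



typedef (overloaded) ('a::euclidean_space) bidx = "Basis :: 'a set"
  using nonempty_Basis by blast

instance bidx :: (euclidean_space) finite
proof
  have "(UNIV :: 'a bidx set) = Abs_bidx ` Basis"
    using type_definition.Abs_image[OF type_definition_bidx] by metis
  then show "finite (UNIV :: 'a bidx set)" by (metis finite_Basis finite_imageI)
qed

definition idx_bidx :: "'a::euclidean_space bidx \<Rightarrow> nat" where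
  "idx_bidx = to_nat_on (UNIV :: 'a bidx set)"

lemma inj_idx_bidx: "inj idx_bidx"
  unfolding idx_bidx_def by (rule inj_on_to_nat_on) (simp add: countable_finite)

instantiation bidx :: (euclidean_space) wellorder
begin
definition less_eq_bidx :: "'a bidx \<Rightarrow> 'a bidx \<Rightarrow> bool" where
  "less_eq_bidx x y \<longleftrightarrow> idx_bidx x \<le> idx_bidx y"
definition less_bidx :: "'a bidx \<Rightarrow> 'a bidx \<Rightarrow> bool" where
  "less_bidx x y \<longleftrightarrow> idx_bidx x < idx_bidx y"
instance
proof
  fix P :: "'a bidx \<Rightarrow> bool" and a :: "'a bidx"
  assume H: "\<And>x. (\<And>y. y < x \<Longrightarrow> P y) \<Longrightarrow> P x"
  show "P a"
  proof (induction a rule: measure_induct_rule[where f=idx_bidx])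
    case (less x) then show ?case using H unfolding less_bidx_def by blast
  qed
qed (use inj_idx_bidx in \<open>auto simp: less_eq_bidx_def less_bidx_def inj_eq dest: injD\<close>)
end

lemma card_bidx: "CARD('a::euclidean_space bidx) = DIM('a)"
  using type_definition.card[OF type_definition_bidx] by simp



lemma linear_pmap: "linear (pmap \<pi>)"
  by (rule linearI) (simp_all add: pmap_def inner_add_left scaleR_add_left sum.distrib scaleR_sum_right)

lemma norm_pmap:
  fixes \<pi> :: "'c::euclidean_space \<Rightarrow> 'd::euclidean_space"
  assumes bij: "bij_betw \<pi> Basis Basis"
  shows "norm (pmap \<pi> x) = norm x"
proof -
  have "pmap \<pi> x \<bullet> pmap \<pi> x = (\<Sum>k\<in>Basis. (pmap \<pi> x \<bullet> k) * (pmap \<pi> x \<bullet> k))"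
    by (rule euclidean_inner)
  also have "\<dots> = (\<Sum>j\<in>Basis. (pmap \<pi> x \<bullet> \<pi> j) * (pmap \<pi> x \<bullet> \<pi> j))"
    using sum.reindex_bij_betw[OF bij, of "\<lambda>k. (pmap \<pi> x \<bullet> k) * (pmap \<pi> x \<bullet> k)"] by simp
  also have "\<dots> = (\<Sum>j\<in>Basis. (x \<bullet> j) * (x \<bullet> j))"
    by (intro sum.cong) (simp_all add: pmap_inner[OF bij])
  also have "\<dots> = x \<bullet> x" by (rule euclidean_inner[symmetric])
  finally show ?thesis by (simp add: norm_eq_sqrt_inner)
qed

lemma pmap_inv_pmap:
  fixes \<pi> :: "'c::euclidean_space \<Rightarrow> 'd::euclidean_space"
  assumes bij: "bij_betw \<pi> Basis Basis"
  shows "pmap (inv_into Basis \<pi>) (pmap \<pi> x) = x"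
proof (rule euclidean_eqI)
  fix k :: 'c assume k: "k \<in> Basis"
  have bij': "bij_betw (inv_into Basis \<pi>) Basis Basis" using bij bij_betw_inv_into by blast
  have "pmap (inv_into Basis \<pi>) (pmap \<pi> x) \<bullet> k = pmap \<pi> x \<bullet> inv_into Basis (inv_into Basis \<pi>) k"
    by (rule pmap_inner'[OF bij' k])
  also have "inv_into Basis (inv_into Basis \<pi>) k = \<pi> k"
    using bij k by (rule inv_into_inv_into_eq)
  finally show "pmap (inv_into Basis \<pi>) (pmap \<pi> x) \<bullet> k = x \<bullet> k"
    using pmap_inner[OF bij k] by simp
qed

lemma lborel_isometry:
  fixes T :: "'a::euclidean_space \<Rightarrow> 'c::euclidean_space"
  assumes lin: "linear T" and nT: "\<And>x. norm (T x) = norm x" and dim: "DIM('c) = DIM('a)"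
  shows "distr lborel borel T = lborel"
proof -
  let ?V = "Basis :: (real^('a bidx)) set"
  have cV: "card ?V = DIM('a)" by (simp add: card_bidx)
  obtain \<pi>a where \<pi>a: "bij_betw \<pi>a (Basis::'a set) ?V"
    using finite_same_card_bij[of "Basis::'a set" ?V] cV by auto
  obtain \<pi>c where \<pi>c: "bij_betw \<pi>c (Basis::'c set) ?V"
    using finite_same_card_bij[of "Basis::'c set" ?V] cV dim by auto
  define Ea where "Ea = pmap \<pi>a"
  define Ea' where "Ea' = pmap (inv_into Basis \<pi>a)"
  define Ec where "Ec = pmap \<pi>c"
  define Ec' where "Ec' = pmap (inv_into Basis \<pi>c)"
  define Q where "Q = (\<lambda>v. Ec (T (Ea' v)))"
  have \<pi>a': "bij_betw (inv_into Basis \<pi>a) ?V Basis" using \<pi>a bij_betw_inv_into by blast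
  have Tx: "T x = Ec' (Q (Ea x))" for x
    unfolding Q_def Ea_def Ea'_def Ec_def Ec'_def
    by (simp add: pmap_inv_pmap[OF \<pi>a] pmap_inv_pmap[OF \<pi>c])
  have linT: "linear Q" unfolding Q_def Ec_def Ea'_def
    using linear_compose[OF linear_compose[OF linear_pmap lin] linear_pmap]
    by (simp add: o_def)
  have "orthogonal_transformation Q"
    unfolding orthogonal_transformation Q_def using linT
    by (simp add: Q_def Ec_def Ea'_def norm_pmap[OF \<pi>c] norm_pmap[OF \<pi>a'] nT)
  then have dQ: "distr lborel borel Q = lborel" by (rule lborel_orth_vec)
  have Qm[measurable]: "Q \<in> borel_measurable borel"
    using linT linear_conv_bounded_linear by (auto intro!: borel_measurable_continuous_onI linear_continuous_on)
  have "T = (\<lambda>x. Ec' (Q (Ea x)))" using Tx by blast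
  then have "distr lborel borel T = distr (distr (distr lborel borel Ea) borel Q) borel Ec'"
    by (simp add: distr_distr Ea_def Ec'_def comp_def)
  also have "\<dots> = lborel"
    unfolding Ea_def Ec'_def
    by (simp add: lborel_pmap[OF \<pi>a] dQ lborel_pmap[OF bij_betw_inv_into[OF \<pi>c]])
  finally show ?thesis .
qed



lemma perp_coords_inner:
  "k \<in> Basis \<Longrightarrow> perp_coords b x \<bullet> k = b k \<bullet> x"
  unfolding perp_coords_def by (simp add: inner_sum_left inner_Basis if_distrib cong: if_cong)

lemma perp_coords_linear: "linear (perp_coords b)"
  by (rule linearI) (simp_all add: perp_coords_def inner_add_right scaleR_add_left sum.distrib scaleR_sum_right)

definition Smap :: "('b::euclidean_space \<Rightarrow> 'a::euclidean_space) \<Rightarrow> 'a \<Rightarrow> 'b \<times> real \<Rightarrow> 'a" where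
  "Smap b w p = (\<Sum>i\<in>Basis. (fst p \<bullet> i) *\<^sub>R b i) + snd p *\<^sub>R w"

lemma Smap_linear: "linear (Smap b w)"
  by (rule linearI) (simp_all add: Smap_def inner_add_left scaleR_add_left sum.distrib scaleR_sum_right algebra_simps)

locale obasis =
  fixes b :: "'b::euclidean_space \<Rightarrow> 'a::euclidean_space" and w :: 'a
  assumes w_unit: "norm w = 1"
    and dim: "DIM('a) = DIM('b) + 1"
    and b_orth: "\<forall>i\<in>Basis. b i \<bullet> w = 0"
    and b_orthonormal: "\<forall>i\<in>Basis. \<forall>j\<in>Basis. b i \<bullet> b j = (if i = j then 1 else 0)"
begin

lemma ww: "w \<bullet> w = 1" using w_unit by (simp add: norm_eq_1)

lemma inner_b_Smap:
  assumes k: "k \<in> Basis" shows "b k \<bullet> Smap b w p = fst p \<bullet> k"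
proof -
  have "(\<Sum>i\<in>Basis. (fst p \<bullet> i) * (b k \<bullet> b i)) = (\<Sum>i\<in>Basis. if i = k then fst p \<bullet> k else 0)"
    by (rule sum.cong) (use b_orthonormal k in auto)
  then show ?thesis using b_orth k
    by (simp add: Smap_def inner_add_right inner_sum_right inner_commute)
qed

lemma inner_w_Smap: "w \<bullet> Smap b w p = snd p"
  using b_orth ww
  by (simp add: Smap_def inner_add_right inner_sum_right inner_commute)

lemma T_Smap: "(perp_coords b (Smap b w p), w \<bullet> Smap b w p) = p"
proof -
  have "perp_coords b (Smap b w p) = fst p"
    by (rule euclidean_eqI) (simp add: perp_coords_inner inner_b_Smap)
  then show ?thesis by (simp add: inner_w_Smap)
qed

lemma Smap_surj: "surj (Smap b w)"
proof -
  have "inj (Smap b w)" by (metis T_Smap injI)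
  then show ?thesis
    by (rule eucl.linear_injective_imp_surjective[OF Smap_linear]) (simp add: dim)
qed

lemma Smap_T: "Smap b w (perp_coords b x, w \<bullet> x) = x"
proof -
  obtain p where "x = Smap b w p" using Smap_surj by (metis surjD)
  then show ?thesis using T_Smap by simp
qed

lemma expand: "x = (\<Sum>i\<in>Basis. (b i \<bullet> x) *\<^sub>R b i) + (w \<bullet> x) *\<^sub>R w"
  using Smap_T[of x] by (simp add: Smap_def perp_coords_inner)

lemma norm_Smap: "norm (Smap b w p) = norm p"
proof -
  have "Smap b w p \<bullet> Smap b w p = (\<Sum>i\<in>Basis. (fst p \<bullet> i) * (b i \<bullet> Smap b w p)) + snd p * (w \<bullet> Smap b w p)"
    by (simp add: Smap_def inner_add_left inner_sum_left)
  also have "\<dots> = fst p \<bullet> fst p + snd p * snd p"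
    by (simp add: inner_b_Smap inner_w_Smap euclidean_inner[of "fst p" "fst p"])
  finally show ?thesis
    by (simp add: norm_eq_sqrt_inner inner_Pair_0 inner_prod_def)
qed

end


definition gd :: "'a::euclidean_space \<Rightarrow> real" where
  "gd x = (2 * pi) powr (- real DIM('a) / 2) * exp (- (norm x)\<^sup>2 / 2)"

lemma gd_measurable[measurable]: "gd \<in> borel_measurable borel"
  unfolding gd_def by measurable

lemma std_gaussian_gd: "std_gaussian = density lborel (\<lambda>x. ennreal (gd x))"
  unfolding std_gaussian_def gd_def ..

lemma gd_nonneg: "0 \<le> gd x"
  by (simp add: gd_def)

lemma snd_nonneg: "0 \<le> std_normal_density s"
  by (simp add: std_normal_density_def)

lemma gd_Pair: "gd (z::'b::euclidean_space, s::real) = gd z * std_normal_density s"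
proof -
  have "(2 * pi) powr (- real (DIM('b) + 1) / 2) = (2 * pi) powr (- real DIM('b) / 2) * (1 / sqrt (2 * pi))"
  proof -
    have "(2 * pi) powr (- real (DIM('b) + 1) / 2) = (2 * pi) powr (- real DIM('b) / 2 + (-1/2))"
      by (simp add: field_simps)
    also have "\<dots> = (2 * pi) powr (- real DIM('b) / 2) * (2 * pi) powr (-1/2)"
      by (rule powr_add)
    also have "(2 * pi) powr (-1/2::real) = 1 / sqrt (2 * pi)"
      by (simp add: powr_minus_divide powr_half_sqrt)
    finally show ?thesis .
  qed
  moreover have "exp (- (norm (z, s))\<^sup>2 / 2) = exp (- (norm z)\<^sup>2 / 2) * exp (- s\<^sup>2 / 2)"
    by (simp add: norm_Pair exp_add[symmetric] field_simps)
  ultimately show ?thesis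
    by (simp add: gd_def std_normal_density_def)
qed

lemma gauss_prod:
  fixes A :: "'b::euclidean_space set" and C :: "real set"
  assumes A: "A \<in> sets borel" and C: "C \<in> sets borel"
  shows "emeasure (density lborel (\<lambda>p::'b\<times>real. ennreal (gd p))) (A \<times> C)
       = emeasure (std_gaussian::'b measure) A * emeasure (density lborel (\<lambda>s. ennreal (std_normal_density s))) C"
proof -
  have [measurable]: "A \<in> sets borel" "C \<in> sets borel" using A C by auto
  have AC: "A \<times> C \<in> sets (borel :: ('b\<times>real) measure)"
    unfolding borel_prod[symmetric] by (rule pair_measureI) auto
  have "emeasure (density lborel (\<lambda>p::'b\<times>real. ennreal (gd p))) (A \<times> C)
      = (\<integral>\<^sup>+ p. ennreal (gd p) * indicator (A \<times> C) p \<partial>(lborel \<Otimes>\<^sub>M lborel))"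
    using AC by (subst emeasure_density) (auto simp: lborel_prod)
  also have "\<dots> = (\<integral>\<^sup>+ z. \<integral>\<^sup>+ s. ennreal (gd (z, s)) * indicator (A \<times> C) (z, s) \<partial>lborel \<partial>lborel)"
  proof (rule lborel.nn_integral_fst[symmetric])
    have "(\<lambda>p::'b\<times>real. ennreal (gd p) * indicator (A \<times> C) p) \<in> borel_measurable borel"
      using AC by measurable
    then show "(\<lambda>p::'b\<times>real. ennreal (gd p) * indicator (A \<times> C) p) \<in> borel_measurable (lborel \<Otimes>\<^sub>M lborel)"
      by (simp add: lborel_prod measurable_lborel1)
  qed
  also have "\<dots> = (\<integral>\<^sup>+ z. (ennreal (gd z) * indicator A z) * (\<integral>\<^sup>+ s. ennreal (std_normal_density s) * indicator C s \<partial>lborel) \<partial>lborel)"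
  proof (rule nn_integral_cong)
    fix z :: 'b
    have "(\<integral>\<^sup>+ s. ennreal (gd (z, s)) * indicator (A \<times> C) (z, s) \<partial>lborel)
        = (\<integral>\<^sup>+ s. (ennreal (gd z) * indicator A z) * (ennreal (std_normal_density s) * indicator C s) \<partial>lborel)"
      by (rule nn_integral_cong)
         (simp add: gd_Pair ennreal_mult[OF gd_nonneg snd_nonneg] indicator_times mult_ac)
    also have "\<dots> = (ennreal (gd z) * indicator A z) * (\<integral>\<^sup>+ s. ennreal (std_normal_density s) * indicator C s \<partial>lborel)"
      by (rule nn_integral_cmult) measurable
    finally show "(\<integral>\<^sup>+ s. ennreal (gd (z, s)) * indicator (A \<times> C) (z, s) \<partial>lborel) = \<dots>" .
  qed
  also have "\<dots> = (\<integral>\<^sup>+ z. ennreal (gd z) * indicator A z \<partial>lborel) * (\<integral>\<^sup>+ s. ennreal (std_normal_density s) * indicator C s \<partial>lborel)"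
    by (rule nn_integral_multc) measurable
  also have "\<dots> = emeasure (std_gaussian::'b measure) A * emeasure (density lborel (\<lambda>s. ennreal (std_normal_density s))) C"
  proof -
    have e1: "emeasure (std_gaussian::'b measure) A = (\<integral>\<^sup>+ z. ennreal (gd z) * indicator A z \<partial>lborel)"
      unfolding std_gaussian_gd by (rule emeasure_density) auto
    have e2: "emeasure (density lborel (\<lambda>s. ennreal (std_normal_density s))) C = (\<integral>\<^sup>+ s. ennreal (std_normal_density s) * indicator C s \<partial>lborel)"
      by (rule emeasure_density) auto
    show ?thesis by (simp only: e1 e2)
  qed
  finally show ?thesis .
qed

lemma std_normal_UNIV: "emeasure (density lborel (\<lambda>s. ennreal (std_normal_density s))) UNIV = 1"
  using prob_space.emeasure_space_1[OF prob_space_normal_density[of 1 0]]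
  by (simp add: std_normal_density_def normal_density_def)

context obasis begin

lemma gauss_Smap: "distr (density lborel (\<lambda>p::'b\<times>real. ennreal (gd p))) borel (Smap b w) = (std_gaussian :: 'a measure)"
proof -
  have Sm[measurable]: "Smap b w \<in> borel_measurable borel"
    using Smap_linear linear_conv_bounded_linear by (auto intro!: borel_measurable_continuous_onI linear_continuous_on)
  have dl: "distr lborel borel (Smap b w) = (lborel :: 'a measure)"
    by (rule lborel_isometry[OF Smap_linear norm_Smap]) (simp add: dim)
  have g: "gd (Smap b w p) = gd p" for p
    by (simp add: gd_def norm_Smap dim)
  have "(std_gaussian :: 'a measure) = density (distr lborel borel (Smap b w)) (\<lambda>x. ennreal (gd x))"
    by (simp add: dl std_gaussian_gd)
  also have "\<dots> = distr (density lborel (\<lambda>p. ennreal (gd (Smap b w p)))) borel (Smap b w)"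
    by (rule density_distr) measurable
  finally show ?thesis by (simp add: g)
qed

lemma gauss_split:
  assumes A: "A \<in> sets borel" and C: "C \<in> sets borel"
  shows "emeasure (std_gaussian :: 'a measure) {x. perp_coords b x \<in> A \<and> w \<bullet> x \<in> C}
       = emeasure (std_gaussian::'b measure) A * emeasure (density lborel (\<lambda>s. ennreal (std_normal_density s))) C"
proof -
  have Sm[measurable]: "Smap b w \<in> borel_measurable borel"
    using Smap_linear linear_conv_bounded_linear by (auto intro!: borel_measurable_continuous_onI linear_continuous_on)
  have Pm[measurable]: "perp_coords b \<in> borel_measurable borel"
    using perp_coords_linear linear_conv_bounded_linear by (auto intro!: borel_measurable_continuous_onI linear_continuous_on)
  have [measurable]: "A \<in> sets borel" "C \<in> sets borel" using A C by auto
  have X: "{x. perp_coords b x \<in> A \<and> w \<bullet> x \<in> C} \<in> sets borel" by measurable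
  have pre: "{y. perp_coords b (Smap b w y) \<in> A \<and> w \<bullet> Smap b w y \<in> C} = A \<times> C"
    using T_Smap by (auto simp: prod_eq_iff)
  have "emeasure (std_gaussian :: 'a measure) {x. perp_coords b x \<in> A \<and> w \<bullet> x \<in> C}
      = emeasure (density lborel (\<lambda>p::'b\<times>real. ennreal (gd p))) (A \<times> C)"
    unfolding gauss_Smap[symmetric] using X by (subst emeasure_distr) (auto simp: pre)
  also have "\<dots> = emeasure (std_gaussian::'b measure) A * emeasure (density lborel (\<lambda>s. ennreal (std_normal_density s))) C"
    by (rule gauss_prod[OF A C])
  finally show ?thesis .
qed

end


lemma hsign_eq1: "hsign z = 1 \<longleftrightarrow> 0 \<le> z"
  by (simp add: hsign_def)

lemma key_ineq:
  fixes a c :: real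
  assumes "0 < a" "c \<ge> 0" "c * c + a * a = 1"
  shows "1 - a \<le> c"
proof (rule ccontr)
  assume "\<not> 1 - a \<le> c"
  then have "c < 1 - a" by simp
  then have "c * c < (1 - a) * (1 - a)" using assms(2) by (intro mult_strict_mono) auto
  then have "2 * a < 2 * (a * a)" using assms(3) by (simp add: algebra_simps)
  then have "1 < a" using assms(1) by simp
  then have "1 < a * a" using less_1_mult by blast
  moreover have "0 \<le> c * c" by simp
  ultimately show False using assms(3) by linarith
qed

theorem lemma2p5:
  fixes D :: "('a::euclidean_space \<times> real) measure"
    and b :: "'b::euclidean_space \<Rightarrow> 'a"
    and \<epsilon> t t_star :: real and w w_star :: 'a
  assumes eps: "0 < \<epsilon>" "\<epsilon> < 1"
    and D_prob: "prob_space D"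
    and D_sets: "sets D = sets (borel :: ('a \<times> real) measure)"
    and D_labels: "AE z in D. snd z \<in> {-1, 1}"
    and D_marg: "distr D borel fst = std_gaussian"
    and w_star_unit: "norm w_star = 1"
    and D_rel: "reliable D (\<lambda>x. hsign (w_star \<bullet> x - t_star))"
    and w_unit: "norm w = 1"
    and w_pos: "w \<bullet> w_star > 0"
    and t_range: "0 \<le> t - t_star" "t - t_star \<le> \<epsilon> / 100"
    and h_bad: "\<not> R_plus (\<lambda>x. hsign (w \<bullet> x - t)) D \<le> \<epsilon> / 2"
    and dim: "DIM('a) = DIM('b) + 1"
    and b_orth: "\<forall>i\<in>Basis. b i \<bullet> w = 0"
    and b_orthonormal: "\<forall>i\<in>Basis. \<forall>j\<in>Basis. b i \<bullet> b j = (if i = j then 1 else 0)"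
  shows
    "let B = {x. w \<bullet> x - t \<ge> 0};
         D' = distr (uniform_measure D (B \<times> UNIV)) (borel :: ('b \<times> real) measure)
                (\<lambda>(x, y). (perp_coords b x, y));
         w' = perp_coords b w_star /\<^sub>R norm (perp_coords b w_star)
     in distr D' borel fst = std_gaussian
        \<and> (\<exists>t'. \<bar>t'\<bar> \<le> \<bar>t_star\<bar> \<and> reliable D' (\<lambda>x. hsign (w' \<bullet> x - t')))
        \<and> measure D' {z. snd z = -1} \<ge> \<epsilon> / 2"
proof -
  interpret ob: obasis b w using w_unit dim b_orth b_orthonormal by unfold_locales
  interpret D: prob_space D by (rule D_prob)
  define B where "B = {x. w \<bullet> x - t \<ge> 0}"
  define g :: "'a \<times> real \<Rightarrow> 'b \<times> real" where "g = (\<lambda>(x, y). (perp_coords b x, y))"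
  define U where "U = uniform_measure D (B \<times> UNIV)"
  define D' where "D' = distr U borel g"
  define v where "v = perp_coords b w_star"
  define w' where "w' = v /\<^sub>R norm v"
  have spD: "space D = UNIV" using sets_eq_imp_space_eq[OF D_sets] by simp
  have Pm[measurable]: "perp_coords b \<in> borel_measurable borel"
    using perp_coords_linear linear_conv_bounded_linear by (auto intro!: borel_measurable_continuous_onI linear_continuous_on)
  have gm: "g \<in> borel_measurable borel"
  proof -
    have "g = (\<lambda>p. (perp_coords b (fst p), snd p))" unfolding g_def by auto
    moreover have "continuous_on UNIV (\<lambda>p::'a \<times> real. (perp_coords b (fst p), snd p))"
    proof -
      have cp: "continuous_on UNIV (perp_coords b)"
        using perp_coords_linear linear_conv_bounded_linear linear_continuous_on by blast
      have "continuous_on UNIV (\<lambda>p::'a \<times> real. perp_coords b (fst p))"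
        by (rule continuous_on_compose2[OF cp continuous_on_fst]) auto
      then show ?thesis by (intro continuous_on_Pair continuous_on_snd) auto
    qed
    ultimately show ?thesis by (simp add: borel_measurable_continuous_onI)
  qed
  have sUb: "sets U = sets (borel::('a\<times>real) measure)" by (simp add: U_def D_sets)
  have gmD: "g \<in> U \<rightarrow>\<^sub>M borel"
    unfolding measurable_cong_sets[OF sUb refl] by (rule gm)
  have Bm[measurable]: "B \<in> sets borel" unfolding B_def by measurable
  have BU: "B \<times> UNIV \<in> sets D"
    unfolding D_sets borel_prod[symmetric] by (rule pair_measureI) auto
  have sU: "sets U = sets D" "space U = UNIV" unfolding U_def by (auto simp: spD)
  have marg: "emeasure D (S \<times> UNIV) = emeasure std_gaussian S" if "S \<in> sets borel" for S
  proof -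
    have fstm: "(fst :: 'a\<times>real \<Rightarrow> 'a) \<in> borel_measurable borel"
      using measurable_fst[of "borel::'a measure" "borel::real measure"] by (simp add: borel_prod)
    have fstD: "(fst :: 'a\<times>real \<Rightarrow> 'a) \<in> D \<rightarrow>\<^sub>M borel"
      unfolding measurable_cong_sets[OF D_sets refl] by (rule fstm)
    have "emeasure (distr D borel fst) S = emeasure D (fst -` S \<inter> space D)"
      by (rule emeasure_distr[OF fstD that])
    moreover have "fst -` S \<inter> space D = S \<times> UNIV" by (auto simp: spD)
    ultimately show ?thesis using D_marg by simp
  qed
  let ?N = "density lborel (\<lambda>s. ennreal (std_normal_density s))"
  have GaU: "emeasure (std_gaussian :: 'a measure) UNIV = 1"
    using marg[of UNIV] D.emeasure_space_1 by (simp add: spD)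
  have "emeasure (std_gaussian :: 'a measure) {x. perp_coords b x \<in> UNIV \<and> w \<bullet> x \<in> UNIV}
       = emeasure (std_gaussian::'b measure) UNIV * emeasure ?N UNIV"
    by (rule ob.gauss_split) auto
  then have GbU: "emeasure (std_gaussian :: 'b measure) UNIV = 1"
    using GaU std_normal_UNIV by simp
  have Bset: "B = {x. perp_coords b x \<in> UNIV \<and> w \<bullet> x \<in> {t..}}" unfolding B_def by auto
  have GaB: "emeasure (std_gaussian :: 'a measure) B = emeasure ?N {t..}"
    unfolding Bset by (subst ob.gauss_split) (auto simp: GbU)
  have split: "emeasure (std_gaussian :: 'a measure) {x. perp_coords b x \<in> A \<and> x \<in> B}
      = emeasure (std_gaussian :: 'b measure) A * emeasure (std_gaussian :: 'a measure) B"
    if "A \<in> sets borel" for A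
  proof -
    have "{x. perp_coords b x \<in> A \<and> x \<in> B} = {x. perp_coords b x \<in> A \<and> w \<bullet> x \<in> {t..}}"
      unfolding B_def by auto
    moreover have "emeasure (std_gaussian :: 'a measure) {x. perp_coords b x \<in> A \<and> w \<bullet> x \<in> {t..}}
       = emeasure (std_gaussian::'b measure) A * emeasure ?N {t..}"
      using that by (intro ob.gauss_split) auto
    ultimately show ?thesis by (simp only: GaB)
  qed
  let ?H = "{(x, y). hsign (w \<bullet> x - t) = 1 \<and> y = (-1::real)}"
  have Hset: "?H = B \<times> {-1}" by (auto simp: hsign_eq1 B_def)
  have HD: "?H \<in> sets D" unfolding Hset D_sets borel_prod[symmetric] by (rule pair_measureI) auto
  have Rgt: "measure D ?H > \<epsilon> / 2" using h_bad unfolding R_plus_def by simp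
  have "measure D ?H \<le> measure D (B \<times> UNIV)"
    using BU by (intro D.finite_measure_mono) (auto simp: hsign_eq1 B_def)
  then have PBpos: "measure D (B \<times> UNIV) > 0" using Rgt eps by linarith
  have PBle: "measure D (B \<times> UNIV) \<le> 1" by simp
  have PB0: "emeasure D (B \<times> UNIV) \<noteq> 0" using PBpos by (simp add: D.emeasure_eq_measure)
  have PBT: "emeasure D (B \<times> UNIV) \<noteq> \<infinity>" by (simp add: D.emeasure_eq_measure)
  have mD': "measure D' S = measure D ((B \<times> UNIV) \<inter> g -` S) / measure D (B \<times> UNIV)"
    if "S \<in> sets borel" for S
  proof -
    have "measure D' S = measure U (g -` S \<inter> space U)"
      unfolding D'_def by (rule measure_distr[OF gmD that])
    also have "\<dots> = measure D ((B \<times> UNIV) \<inter> g -` S) / measure D (B \<times> UNIV)"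
      unfolding U_def using PB0 PBT measurable_sets[OF gmD that] sU
      by (subst measure_uniform_measure) (auto simp: U_def)
    finally show ?thesis .
  qed
  have P1: "distr D' borel fst = (std_gaussian :: 'b measure)"
  proof (rule measure_eqI)
    show "sets (distr D' borel fst) = sets (std_gaussian :: 'b measure)"
      by (simp add: std_gaussian_def)
    fix A assume "A \<in> sets (distr D' borel fst)"
    then have A[measurable]: "A \<in> sets borel" by simp
    have fstm: "(fst :: 'b\<times>real \<Rightarrow> 'b) \<in> borel_measurable borel"
      using measurable_fst[of "borel::'b measure" "borel::real measure"] by (simp add: borel_prod)
    have "emeasure (distr D' borel fst) A = emeasure D' (fst -` A \<inter> space D')"
      by (rule emeasure_distr) (use fstm A in \<open>auto simp: D'_def\<close>)
    also have "fst -` A \<inter> space D' = A \<times> UNIV" by (auto simp: D'_def)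
    also have "emeasure D' (A \<times> UNIV) = emeasure U (g -` (A \<times> UNIV) \<inter> space U)"
      unfolding D'_def by (rule emeasure_distr[OF gmD]) (simp add: borel_prod[symmetric])
    also have "\<dots> = emeasure D ((B \<times> UNIV) \<inter> (g -` (A \<times> UNIV))) / emeasure D (B \<times> UNIV)"
      unfolding U_def using BU measurable_sets[OF gmD, of "A \<times> UNIV"] sU
      by (subst emeasure_uniform_measure) (auto simp: U_def borel_prod[symmetric])
    also have "(B \<times> UNIV) \<inter> (g -` (A \<times> UNIV)) = {x. perp_coords b x \<in> A \<and> x \<in> B} \<times> UNIV"
      by (auto simp: g_def)
    also have "emeasure D \<dots> = emeasure (std_gaussian :: 'b measure) A * emeasure D (B \<times> UNIV)"
      by (simp add: marg split)
    also have "\<dots> / emeasure D (B \<times> UNIV) = emeasure (std_gaussian :: 'b measure) A"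
      by (rule ennreal_mult_divide_eq[OF PB0]) (use PBT in simp)
    finally show "emeasure (distr D' borel fst) A = emeasure std_gaussian A" .
  qed
  have P3: "measure D' {z. snd z = -1} \<ge> \<epsilon> / 2"
  proof -
    have "{z::'b \<times> real. snd z = -1} = UNIV \<times> {-1}" by auto
    then have S3: "{z::'b \<times> real. snd z = -1} \<in> sets borel"
      unfolding borel_prod[symmetric] by (simp add: pair_measureI)
    have "(B \<times> UNIV) \<inter> g -` {z. snd z = -1} = ?H"
      by (auto simp: g_def hsign_eq1 B_def)
    then have "measure D' {z. snd z = -1} = measure D ?H / measure D (B \<times> UNIV)"
      using mD'[OF S3] by simp
    also have "\<dots> \<ge> measure D ?H"
      using PBpos PBle by (simp add: le_divide_eq mult_left_le)
    finally show ?thesis using Rgt by linarith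
  qed
  define a where "a = w \<bullet> w_star"
  define c where "c = norm v"
  define t' where "t' = t_star * (1 - a) / c"
  have ident: "w_star \<bullet> x = v \<bullet> perp_coords b x + a * (w \<bullet> x)" for x
  proof -
    have "w_star \<bullet> x = w_star \<bullet> ((\<Sum>i\<in>Basis. (b i \<bullet> x) *\<^sub>R b i) + (w \<bullet> x) *\<^sub>R w)"
      using ob.expand[of x] by simp
    also have "\<dots> = (\<Sum>i\<in>Basis. (b i \<bullet> x) * (w_star \<bullet> b i)) + (w \<bullet> x) * (w_star \<bullet> w)"
      by (simp add: inner_add_right inner_sum_right)
    finally have e1: "w_star \<bullet> x = (\<Sum>i\<in>Basis. (b i \<bullet> x) * (w_star \<bullet> b i)) + (w \<bullet> x) * (w_star \<bullet> w)" .
    have e2: "v \<bullet> perp_coords b x = (\<Sum>i\<in>Basis. (v \<bullet> i) * (perp_coords b x \<bullet> i))"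
      by (rule euclidean_inner)
    have e3: "(\<Sum>i\<in>Basis. (v \<bullet> i) * (perp_coords b x \<bullet> i)) = (\<Sum>i\<in>Basis. (b i \<bullet> x) * (w_star \<bullet> b i))"
    proof (rule sum.cong)
      fix i :: 'b assume i: "i \<in> Basis"
      have "v \<bullet> i = w_star \<bullet> b i" using perp_coords_inner[OF i, of b w_star] by (simp add: v_def inner_commute)
      moreover have "perp_coords b x \<bullet> i = b i \<bullet> x" by (rule perp_coords_inner[OF i])
      ultimately show "(v \<bullet> i) * (perp_coords b x \<bullet> i) = (b i \<bullet> x) * (w_star \<bullet> b i)" by simp
    qed simp
    show ?thesis using e1 e2 e3 by (simp add: a_def inner_commute)
  qed
  have cca: "c * c + a * a = 1"
  proof -
    have "1 = w_star \<bullet> w_star" using w_star_unit by (simp add: norm_eq_1)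
    also have "\<dots> = v \<bullet> v + a * a"
      using ident[of w_star] by (simp add: v_def a_def inner_commute)
    finally show ?thesis by (simp add: c_def norm_eq_sqrt_inner)
  qed
  have apos: "0 < a" using w_pos a_def by simp
  have c0: "0 \<le> c" by (simp add: c_def)
  have a1: "1 - a \<le> c" by (rule key_ineq[OF apos c0 cca])
  have aa: "a * a \<le> 1" using cca mult_nonneg_nonneg[OF c0 c0] by linarith
  have ale1: "a \<le> 1"
  proof (rule ccontr)
    assume "\<not> a \<le> 1" then have a1': "1 < a" by simp
    have "1 < a * a" by (rule less_1_mult[OF a1' a1'])
    then show False using aa by linarith
  qed
  have tt': "\<bar>t'\<bar> \<le> \<bar>t_star\<bar>"
  proof (cases "c = 0")
    case True then show ?thesis by (simp add: t'_def)
  next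
    case False
    then have cp: "c > 0" using c0 by simp
    have "\<bar>t'\<bar> = \<bar>t_star\<bar> * ((1 - a) / c)"
      using a1 cp apos ale1 by (simp add: t'_def abs_mult abs_div)
    also have "\<dots> \<le> \<bar>t_star\<bar> * 1"
      using a1 cp by (intro mult_left_mono) auto
    finally show ?thesis by simp
  qed
  have incl: "w_star \<bullet> x - t_star \<ge> 0" if xB: "x \<in> B" and xh: "w' \<bullet> perp_coords b x - t' \<ge> 0" for x
  proof (cases "c = 0")
    case True
    then have "a * a = 1" using cca by simp
    then have "(a - 1) * (a + 1) = 0" by (simp add: algebra_simps)
    then have "a = 1" using apos by simp
    moreover have "v = 0" using True by (simp add: c_def)
    ultimately show ?thesis using ident[of x] xB t_range unfolding B_def by simp
  next
    case False
    then have cp: "c > 0" using c0 by simp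
    have "v \<bullet> perp_coords b x = c * (w' \<bullet> perp_coords b x)"
      using cp by (simp add: w'_def c_def)
    also have "\<dots> \<ge> c * t'" using xh cp by (intro mult_left_mono) auto
    finally have "v \<bullet> perp_coords b x \<ge> t_star * (1 - a)" using cp by (simp add: t'_def)
    moreover have "a * (w \<bullet> x) \<ge> a * t_star"
      using xB t_range apos unfolding B_def by (intro mult_left_mono) auto
    ultimately show ?thesis using ident[of x] by (simp add: algebra_simps)
  qed
  have P2: "reliable D' (\<lambda>x. hsign (w' \<bullet> x - t'))"
  proof -
    let ?S = "{(x, y). hsign (w' \<bullet> x - t') = 1 \<and> y = (-1::real)}"
    let ?F = "{(x, y). hsign (w_star \<bullet> x - t_star) = 1 \<and> y = (-1::real)}"
    have Sset: "?S = {x. 0 \<le> w' \<bullet> x - t'} \<times> {-1}" by (auto simp: hsign_eq1)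
    have S1: "{x. 0 \<le> w' \<bullet> x - t'} \<in> sets borel" by measurable
    have Sm: "?S \<in> sets borel" unfolding Sset borel_prod[symmetric] using S1 by (simp add: pair_measureI)
    have Fset: "?F = {x. 0 \<le> w_star \<bullet> x - t_star} \<times> {-1}" by (auto simp: hsign_eq1)
    have F1: "{x. 0 \<le> w_star \<bullet> x - t_star} \<in> sets borel" by measurable
    have FD: "?F \<in> sets D" unfolding Fset D_sets borel_prod[symmetric] using F1 by (simp add: pair_measureI)
    have F0: "measure D ?F = 0" using D_rel unfolding reliable_def by simp
    have "(B \<times> UNIV) \<inter> g -` ?S \<subseteq> ?F"
      using incl by (auto simp: g_def hsign_eq1)
    then have "measure D ((B \<times> UNIV) \<inter> g -` ?S) \<le> measure D ?F"
      using FD by (intro D.finite_measure_mono) auto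
    then have "measure D ((B \<times> UNIV) \<inter> g -` ?S) = 0" using F0 by (simp add: measure_nonneg antisym)
    then show ?thesis unfolding reliable_def using mD'[OF Sm] by simp
  qed
  have "distr D' borel fst = std_gaussian
        \<and> (\<exists>t'. \<bar>t'\<bar> \<le> \<bar>t_star\<bar> \<and> reliable D' (\<lambda>x. hsign (w' \<bullet> x - t')))
        \<and> measure D' {z. snd z = -1} \<ge> \<epsilon> / 2"
    using P1 P2 P3 tt' by blast
  then show ?thesis
    unfolding Let_def D'_def U_def g_def B_def w'_def v_def .
qed


end
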